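(* Let $G\in\mathcal{V}_{\sigma\ell\mathbb{G}_u}$. Then the interpretation of the constant $1$ in $G$ is a weak unit of the $\ell$-group $G$, i.e. $1\ge0$ and for all $f\in G$, $f\wedge1=0$ implies $f=0$.
   Context: $\mathcal{V}_{\sigma\ell\mathbb{G}_u}$ is the infinitary variety of algebras $(G,0,+,-,\vee,\wedge,\bigvee^-,1)$, with $\bigvee^-$ of countably infinite arity ($\bigvee_{n\ge1}^g f_n:=\bigvee^-(g,f_1,f_2,\dots)$) and $1$ a constant, satisfying the $\ell$-group axioms, (A1) $\bigvee_{n\ge1}^g f_n=\bigvee_{n\ge1}^g(f_n\wedge g)$; (A2) $\bigvee_{n\ge1}^g f_n=(f_1\wedge g)\vee\bigvee^-(g,f_2,f_3,\dots)$; (A3) $\bigvee_{n\ge1}^g(f_n\wedge h)\le h$ ($a\le b$ meaning $a\wedge b=a$); and $\bigvee_{n\ge1}^{|f|}(|f|\wedge n1)=|f|$ for all $f$. *)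

theory Defs
  imports Main
begin

text \<open>The countably infinitary operation is
  bv g f  =  bigvee(g, f 1, f 2, ...)   where the sequence f_1, f_2, ... is
represented by f 0, f 1, ... (index shift by one).\<close>

definition lgroup ::
  "'a \<Rightarrow> ('a \<Rightarrow> 'a \<Rightarrow> 'a) \<Rightarrow> ('a \<Rightarrow> 'a) \<Rightarrow> ('a \<Rightarrow> 'a \<Rightarrow> 'a) \<Rightarrow> ('a \<Rightarrow> 'a \<Rightarrow> 'a) \<Rightarrow> bool"
where
  "lgroup z pl ng jn mt \<longleftrightarrow>
     (\<forall>a b c. pl (pl a b) c = pl a (pl b c)) \<and>
     (\<forall>a b. pl a b = pl b a) \<and>
     (\<forall>a. pl z a = a) \<and>
     (\<forall>a. pl (ng a) a = z) \<and>
     (\<forall>a b. jn a b = jn b a) \<and> (\<forall>a b. mt a b = mt b a) \<and>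
     (\<forall>a b c. jn (jn a b) c = jn a (jn b c)) \<and>
     (\<forall>a b c. mt (mt a b) c = mt a (mt b c)) \<and>
     (\<forall>a b. jn a (mt a b) = a) \<and> (\<forall>a b. mt a (jn a b) = a) \<and>
     (\<forall>a b c. pl a (jn b c) = jn (pl a b) (pl a c))"

definition lle :: "('a \<Rightarrow> 'a \<Rightarrow> 'a) \<Rightarrow> 'a \<Rightarrow> 'a \<Rightarrow> bool" where
  "lle mt a b \<longleftrightarrow> mt a b = a"

definition labs :: "('a \<Rightarrow> 'a) \<Rightarrow> ('a \<Rightarrow> 'a \<Rightarrow> 'a) \<Rightarrow> 'a \<Rightarrow> 'a" where
  "labs ng jn f = jn f (ng f)"

fun nmul :: "'a \<Rightarrow> ('a \<Rightarrow> 'a \<Rightarrow> 'a) \<Rightarrow> nat \<Rightarrow> 'a \<Rightarrow> 'a" where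
  "nmul z pl 0 a = z"
| "nmul z pl (Suc n) a = pl (nmul z pl n a) a"

definition sigma_lgu ::
  "'a \<Rightarrow> ('a \<Rightarrow> 'a \<Rightarrow> 'a) \<Rightarrow> ('a \<Rightarrow> 'a) \<Rightarrow> ('a \<Rightarrow> 'a \<Rightarrow> 'a) \<Rightarrow> ('a \<Rightarrow> 'a \<Rightarrow> 'a)
   \<Rightarrow> ('a \<Rightarrow> (nat \<Rightarrow> 'a) \<Rightarrow> 'a) \<Rightarrow> 'a \<Rightarrow> bool"
where
  "sigma_lgu z pl ng jn mt bv one \<longleftrightarrow>
     lgroup z pl ng jn mt \<and>
     (\<forall>g f. bv g f = bv g (\<lambda>n. mt (f n) g)) \<and>
     (\<forall>g f. bv g f = jn (mt (f 0) g) (bv g (\<lambda>n. f (Suc n)))) \<and>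
     (\<forall>g f h. lle mt (bv g (\<lambda>n. mt (f n) h)) h) \<and>
     (\<forall>f. bv (labs ng jn f) (\<lambda>n. mt (labs ng jn f) (nmul z pl (Suc n) one)) = labs ng jn f)"

end

theory Submission
  imports Defs
begin

locale LG =
  fixes z :: 'a and pl :: "'a \<Rightarrow> 'a \<Rightarrow> 'a" (infixl "\<oplus>" 65) and ng :: "'a \<Rightarrow> 'a"
    and jn :: "'a \<Rightarrow> 'a \<Rightarrow> 'a" (infixl "\<squnion>" 60) and mt :: "'a \<Rightarrow> 'a \<Rightarrow> 'a" (infixl "\<sqinter>" 61)
  assumes L: "lgroup z pl ng jn mt"
begin

lemma ax:
  "(a \<oplus> b) \<oplus> c = a \<oplus> (b \<oplus> c)" "a \<oplus> b = b \<oplus> a" "z \<oplus> a = a" "ng a \<oplus> a = z"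
  "a \<squnion> b = b \<squnion> a" "a \<sqinter> b = b \<sqinter> a" "(a \<squnion> b) \<squnion> c = a \<squnion> (b \<squnion> c)"
  "(a \<sqinter> b) \<sqinter> c = a \<sqinter> (b \<sqinter> c)" "a \<squnion> (a \<sqinter> b) = a" "a \<sqinter> (a \<squnion> b) = a"
  "a \<oplus> (b \<squnion> c) = (a \<oplus> b) \<squnion> (a \<oplus> c)"
  using L unfolding lgroup_def by auto

lemma r0: "a \<oplus> z = a" by (metis ax(2,3))
lemma rinv: "a \<oplus> ng a = z" by (metis ax(2,4))
lemma cancel: "c \<oplus> a = c \<oplus> b \<Longrightarrow> a = b" by (metis ax(1,3,4))
lemma nn: "ng (ng a) = a" by (metis cancel ax(4) rinv)
lemma nsum: "ng (a \<oplus> b) = ng a \<oplus> ng b"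
  by (metis ax(1,2) cancel r0 rinv)
lemma n0: "ng z = z" by (metis r0 ax(4))
lemma jidem: "a \<squnion> a = a" by (metis ax(9,10))
lemma midem: "a \<sqinter> a = a" by (metis ax(9,10))
lemma le_j: "lle mt a b \<longleftrightarrow> a \<squnion> b = b" unfolding lle_def by (metis ax(5,6,9,10))
lemma le_refl: "lle mt a a" unfolding lle_def by (rule midem)
lemma le_trans: "lle mt a b \<Longrightarrow> lle mt b c \<Longrightarrow> lle mt a c" unfolding lle_def by (metis ax(8))
lemma le_anti: "lle mt a b \<Longrightarrow> lle mt b a \<Longrightarrow> a = b" unfolding lle_def by (metis ax(6))
lemma meet_le1: "lle mt (a \<sqinter> b) a" unfolding lle_def by (metis ax(6,8) midem)
lemma meet_le2: "lle mt (a \<sqinter> b) b" unfolding lle_def by (metis ax(8) midem)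
lemma meet_glb: "lle mt c a \<Longrightarrow> lle mt c b \<Longrightarrow> lle mt c (a \<sqinter> b)" unfolding lle_def by (metis ax(8))
lemma join_le1: "lle mt a (a \<squnion> b)" using le_j by (metis ax(7) jidem)
lemma join_le2: "lle mt b (a \<squnion> b)" using join_le1 ax(5) by metis
lemma join_lub: "lle mt a c \<Longrightarrow> lle mt b c \<Longrightarrow> lle mt (a \<squnion> b) c" using le_j by (metis ax(7))
lemma mono_add: "lle mt a b \<Longrightarrow> lle mt (c \<oplus> a) (c \<oplus> b)" using le_j ax(11) by metis
lemma mono_add2: "lle mt a b \<Longrightarrow> lle mt (a \<oplus> c) (b \<oplus> c)" using mono_add ax(2) by metis
lemma add_mono: "lle mt a b \<Longrightarrow> lle mt c d \<Longrightarrow> lle mt (a \<oplus> c) (b \<oplus> d)"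
  by (meson le_trans mono_add mono_add2)
lemma anti_neg: "lle mt a b \<Longrightarrow> lle mt (ng b) (ng a)"
proof -
  assume "lle mt a b"
  hence "lle mt (ng b \<oplus> ng a \<oplus> a) (ng b \<oplus> ng a \<oplus> b)" by (rule mono_add)
  thus ?thesis by (metis ax(1,2,4) r0)
qed
lemma neg_le_iff: "lle mt (ng a) (ng b) \<longleftrightarrow> lle mt b a" by (metis anti_neg nn)
lemma neg_join: "ng (a \<squnion> b) = ng a \<sqinter> ng b"
proof (rule le_anti)
  show "lle mt (ng (a \<squnion> b)) (ng a \<sqinter> ng b)"
    by (intro meet_glb anti_neg join_le1 join_le2)
  have "lle mt a (ng (ng a \<sqinter> ng b))" by (metis anti_neg meet_le1 nn)
  moreover have "lle mt b (ng (ng a \<sqinter> ng b))" by (metis anti_neg meet_le2 nn)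
  ultimately have "lle mt (a \<squnion> b) (ng (ng a \<sqinter> ng b))" by (rule join_lub)
  thus "lle mt (ng a \<sqinter> ng b) (ng (a \<squnion> b))" by (metis anti_neg nn)
qed
lemma add_meet: "a \<oplus> (b \<sqinter> c) = (a \<oplus> b) \<sqinter> (a \<oplus> c)"
proof -
  have "b \<sqinter> c = ng (ng b \<squnion> ng c)" by (metis neg_join nn)
  hence "a \<oplus> (b \<sqinter> c) = ng (ng a \<oplus> (ng b \<squnion> ng c))" by (metis nsum nn)
  also have "\<dots> = ng ((ng a \<oplus> ng b) \<squnion> (ng a \<oplus> ng c))" by (simp add: ax(11))
  also have "\<dots> = (a \<oplus> b) \<sqinter> (a \<oplus> c)" by (metis neg_join nsum nn)
  finally show ?thesis .
qed

lemma pos_sum_meet: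
  assumes "lle mt z a" "lle mt z b" "lle mt z c"
  shows "lle mt (c \<sqinter> (a \<oplus> b)) ((c \<sqinter> a) \<oplus> (c \<sqinter> b))"
proof -
  have e: "(c \<sqinter> a) \<oplus> (c \<sqinter> b) = ((c \<oplus> c) \<sqinter> (c \<oplus> b)) \<sqinter> ((a \<oplus> c) \<sqinter> (a \<oplus> b))"
    by (metis add_meet ax(2))
  have 1: "lle mt c (c \<oplus> c)" using mono_add[OF assms(3), of c] r0 by metis
  have 2: "lle mt c (c \<oplus> b)" using mono_add[OF assms(2), of c] r0 by metis
  have 3: "lle mt c (a \<oplus> c)" using mono_add2[OF assms(1), of c] ax(3) by metis
  have "lle mt (c \<sqinter> (a \<oplus> b)) (((c \<oplus> c) \<sqinter> (c \<oplus> b)) \<sqinter> ((a \<oplus> c) \<sqinter> (a \<oplus> b)))"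
    by (meson 1 2 3 le_trans meet_glb meet_le1 meet_le2)
  thus ?thesis using e by simp
qed

lemma disj_sum:
  assumes "lle mt z a" "lle mt z b" "lle mt z c" "c \<sqinter> a = z" "c \<sqinter> b = z"
  shows "c \<sqinter> (a \<oplus> b) = z"
proof (rule le_anti)
  show "lle mt (c \<sqinter> (a \<oplus> b)) z" using pos_sum_meet[OF assms(1-3)] assms(4,5) ax(3) by metis
  have "lle mt z (a \<oplus> b)" using add_mono[OF assms(1,2)] ax(3) by metis
  thus "lle mt z (c \<sqinter> (a \<oplus> b))" using assms(3) meet_glb by blast
qed

lemma nmul_pos: "lle mt z a \<Longrightarrow> lle mt z (nmul z pl k a)"
proof (induction k)
  case 0 thus ?case by (simp add: le_refl)
next
  case (Suc k) thus ?case using add_mono[of z "nmul z pl k a" z a] by (simp add: ax(3))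
qed


lemma pos_neg_disj: "(a \<squnion> z) \<sqinter> (ng a \<squnion> z) = z"
proof -
  have m: "ng (ng a \<squnion> z) = a \<sqinter> z" by (metis neg_join nn n0)
  have s: "(a \<squnion> z) \<oplus> (a \<sqinter> z) = a"
  proof -
    have "a \<oplus> ng (a \<squnion> z) = (a \<oplus> ng a) \<sqinter> (a \<oplus> z)" by (metis neg_join n0 add_meet)
    hence "a \<oplus> ng (a \<squnion> z) = a \<sqinter> z" by (metis rinv r0 ax(6))
    thus ?thesis by (metis ax(1,2,4) r0)
  qed
  have "((a \<squnion> z) \<sqinter> (ng a \<squnion> z)) \<oplus> ng (ng a \<squnion> z) = ((a \<squnion> z) \<oplus> ng (ng a \<squnion> z)) \<sqinter> ((ng a \<squnion> z) \<oplus> ng (ng a \<squnion> z))"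
    by (metis add_meet ax(2))
  also have "\<dots> = a \<sqinter> z" by (simp only: rinv, simp only: m s r0 ax(6))
  also have "\<dots> = z \<oplus> ng (ng a \<squnion> z)" using m ax(3) by simp
  finally show ?thesis by (metis ax(2) cancel)
qed

lemma le_join_z: "lle mt z (a \<squnion> z)" by (metis join_le2)
lemma labs_pos: "lle mt z a \<Longrightarrow> labs ng jn a = a"
proof -
  assume a: "lle mt z a"
  hence "lle mt (ng a) z" using anti_neg n0 by metis
  hence "lle mt (ng a) a" using a le_trans by blast
  thus ?thesis unfolding labs_def using le_j ax(5) by metis
qed

end


theorem mainTheorem7:
  fixes z :: 'a and pl :: "'a \<Rightarrow> 'a \<Rightarrow> 'a" and ng :: "'a \<Rightarrow> 'a"
    and jn mt :: "'a \<Rightarrow> 'a \<Rightarrow> 'a" and bv :: "'a \<Rightarrow> (nat \<Rightarrow> 'a) \<Rightarrow> 'a" and one :: 'a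
  assumes "sigma_lgu z pl ng jn mt bv one"
  shows "lle mt z one \<and> (\<forall>f. mt f one = z \<longrightarrow> f = z)"
proof -
  have L: "lgroup z pl ng jn mt" using assms unfolding sigma_lgu_def by blast
  interpret LG z pl ng jn mt by (rule LG.intro[OF L])
  have a3: "\<And>g f h. lle mt (bv g (\<lambda>n. mt (f n) h)) h" using assms unfolding sigma_lgu_def by blast
  have a4: "\<And>f. bv (labs ng jn f) (\<lambda>n. mt (labs ng jn f) (nmul z pl (Suc n) one)) = labs ng jn f"
    using assms unfolding sigma_lgu_def by blast
  define p where "p = jn one z"
  define q where "q = jn (ng one) z"
  have qp: "mt q p = z" unfolding p_def q_def using pos_neg_disj ax(6) by metis
  have p0: "lle mt z p" unfolding p_def by (rule le_join_z)
  have q0: "lle mt z q" unfolding q_def by (rule le_join_z)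
  have mk: "lle mt (nmul z pl k one) (nmul z pl k p)" for k
  proof (induction k)
    case 0 thus ?case by (simp add: le_refl)
  next
    case (Suc k) thus ?case using add_mono join_le1 p_def by simp
  qed
  have dk: "mt q (nmul z pl k p) = z" for k
  proof (induction k)
    case 0 thus ?case using q0 unfolding lle_def by (simp add: ax(6))
  next
    case (Suc k) thus ?case using disj_sum[OF nmul_pos[OF p0] p0 q0] qp by simp
  qed
  have tz: "mt (mt q (nmul z pl (Suc n) one)) z = mt q (nmul z pl (Suc n) one)" for n
  proof -
    have "lle mt (mt q (nmul z pl (Suc n) one)) (mt q (nmul z pl (Suc n) p))"
      by (meson meet_glb meet_le1 meet_le2 mk le_trans)
    thus ?thesis using dk unfolding lle_def by metis
  qed
  have "bv q (\<lambda>n. mt q (nmul z pl (Suc n) one)) = q" using a4[of q] labs_pos[OF q0] by simp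
  hence "bv q (\<lambda>n. mt (mt q (nmul z pl (Suc n) one)) z) = q" using tz by simp
  hence "lle mt q z" using a3 by metis
  hence qz: "q = z" using q0 le_anti by blast
  have "lle mt (ng one) z" using join_le1[of "ng one" z] qz q_def by simp
  hence one0: "lle mt z one" using anti_neg nn n0 by metis
  have "f = z" if f: "mt f one = z" for f
  proof -
    have f0: "lle mt z f" using meet_le1[of f one] f by simp
    have fk: "mt f (nmul z pl k one) = z" for k
    proof (induction k)
      case 0 thus ?case using f0 unfolding lle_def by (simp add: ax(6))
    next
      case (Suc k) thus ?case using disj_sum[OF nmul_pos[OF one0] one0 f0] f by simp
    qed
    have "bv f (\<lambda>n. z) = f" using a4[of f] labs_pos[OF f0] fk[of "Suc _"] by (simp del: nmul.simps)
    hence "bv f (\<lambda>n. mt z z) = f" using midem by simp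
    hence "lle mt f z" using a3[of f "\<lambda>n. z" z] by simp
    thus ?thesis using f0 le_anti by blast
  qed
  thus ?thesis using one0 by blast
qed

end
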